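(* Let $n\ge 1$, $k\in\{1,\ldots,n\}$, $r\in\mathbb{R}$ and $x^0\in\mathbb{R}^n$. Let $\kappa\subseteq\{1,\ldots,n\}$ with $|\kappa|=k$ be a set of indices of $k$ largest entries of $x^0$ (ties broken arbitrarily), and let $[k]\in\kappa$ be an index such that $x^0_{[k]}$ is the $k$-th largest entry of $x^0$ (i.e. $x^0_{[k]}=\min_{i\in\kappa}x^0_i$). Then the unique minimizer of $\tfrac12\|x-x^0\|_2^2$ over $\mathcal{B}^r_{(k)}:=\{x\in\mathbb{R}^n:\ \sum_{i=1}^k x^{\downarrow}_i\le r\}$ coincides with the unique minimizer of $\tfrac12\|x-x^0\|_2^2$ over the polyhedron $$\Big\{x\in\mathbb{R}^n:\ \sum_{i\in\kappa}x_i\le r,\ \ x_i\ge x_{[k]}\ \forall i\in\kappa,\ \ x_j\le x_{[k]}\ \forall j\notin\kappa\Big\}.$$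
   Context: For $x\in\mathbb{R}^n$, $x^{\downarrow}$ denotes the nonincreasing rearrangement of $x$, so $\sum_{i=1}^k x^{\downarrow}_i$ is the sum of the $k$ largest entries of $x$. *)

theory Defs
  imports "HOL-Analysis.Analysis" "HOL-Library.Multiset"
begin

definition decr_rearr :: "real^'n \<Rightarrow> real list" where
  "decr_rearr x = rev (sorted_list_of_multiset (image_mset (\<lambda>i. x $ i) (mset_set (UNIV :: 'n set))))"

definition topk_sum :: "nat \<Rightarrow> real^'n \<Rightarrow> real" where
  "topk_sum k x = sum_list (take k (decr_rearr x))"

definition topk_ball :: "nat \<Rightarrow> real \<Rightarrow> (real^'n) set" where
  "topk_ball k r = {x. topk_sum k x \<le> r}"

definition topk_poly :: "'n set \<Rightarrow> 'n \<Rightarrow> real \<Rightarrow> (real^'n) set" where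
  "topk_poly K p r = {x. (\<Sum>i\<in>K. x $ i) \<le> r \<and> (\<forall>i\<in>K. x $ i \<ge> x $ p) \<and> (\<forall>j. j \<notin> K \<longrightarrow> x $ j \<le> x $ p)}"

definition is_proj_min :: "(real^'n) set \<Rightarrow> real^'n \<Rightarrow> real^'n \<Rightarrow> bool" where
  "is_proj_min C x0 x \<longleftrightarrow> x \<in> C \<and> (\<forall>y\<in>C. (1/2) * (norm (x - x0))^2 \<le> (1/2) * (norm (y - x0))^2)"

end

theory Submission
  imports Defs
begin

lemma topk_dom:
  fixes x :: "real^'n"
  assumes "card K = k" and dom: "\<forall>i\<in>K. \<forall>j. j \<notin> K \<longrightarrow> x $ j \<le> x $ i"
  shows "topk_sum k x = (\<Sum>i\<in>K. x $ i)"
proof -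
  define A where "A = sorted_list_of_multiset (image_mset (\<lambda>i. x $ i) (mset_set (- K)))"
  define B where "B = sorted_list_of_multiset (image_mset (\<lambda>i. x $ i) (mset_set K))"
  have U: "(UNIV::'n set) = (-K) \<union> K" by auto
  have M: "image_mset (\<lambda>i. x $ i) (mset_set (UNIV :: 'n set)) = mset (A @ B)"
    unfolding A_def B_def by (subst U, subst mset_set_Union) auto
  have "sorted (A @ B)"
    unfolding sorted_append A_def B_def using dom by auto
  hence S: "sorted_list_of_multiset (image_mset (\<lambda>i. x $ i) (mset_set (UNIV :: 'n set))) = A @ B"
    unfolding M sorted_list_of_multiset_mset by (simp add: sorted_sort_id)
  have LB: "length B = k" unfolding B_def using assms(1)
    by (metis size_image_mset size_mset size_mset_set mset_sorted_list_of_multiset)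
  have "topk_sum k x = sum_list (rev B)"
    unfolding topk_sum_def decr_rearr_def S using LB by simp
  also have "\<dots> = sum_list B" by simp
  also have "\<dots> = sum_mset (mset B)" by (simp add: sum_mset_sum_list)
  also have "\<dots> = (\<Sum>i\<in>K. x $ i)" unfolding B_def
    by (simp add: sum_unfold_sum_mset)
  finally show ?thesis .
qed


lemma exists_dom:
  fixes x :: "real^'n"
  assumes "k \<le> CARD('n)"
  shows "\<exists>T. card T = k \<and> (\<forall>i\<in>T. \<forall>j. j \<notin> T \<longrightarrow> x $ j \<le> x $ i)"
proof -
  let ?F = "{S::'n set. card S = k}"
  let ?f = "\<lambda>S. sum (($) x) S"
  have fin: "finite ?F" by simp
  have ne: "?F \<noteq> {}"
    using obtain_subset_with_card_n[of k "UNIV::'n set"] assms by auto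
  have "Max (?f ` ?F) \<in> ?f ` ?F" using fin ne by (intro Max_in) auto
  then obtain T where T: "T \<in> ?F" and TM: "?f T = Max (?f ` ?F)" by auto
  have Tmax: "?f S \<le> ?f T" if "card S = k" for S
  proof -
    have "?f S \<in> ?f ` ?F" using that by auto
    hence "?f S \<le> Max (?f ` ?F)" using fin by (intro Max_ge) auto
    thus ?thesis using TM by simp
  qed
  show ?thesis
  proof (intro exI conjI ballI allI impI)
    show "card T = k" using T by simp
  next
    fix i j assume i: "i \<in> T" and j: "j \<notin> T"
    show "x $ j \<le> x $ i"
    proof (rule ccontr)
      assume c: "\<not> x $ j \<le> x $ i"
      let ?S = "insert j (T - {i})"
      have c1: "card (T - {i}) = k - 1" using T i by simp
      have k1: "k \<ge> 1" using T i card_gt_0_iff[of T] by auto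
      have "card ?S = Suc (card (T - {i}))" using j by (intro card_insert_disjoint) auto
      hence "card ?S = k" using c1 k1 by simp
      moreover have "?f ?S = ?f T - x $ i + x $ j"
        using i j by (simp add: sum_diff1)
      ultimately show False using Tmax[of ?S] c by simp
    qed
  qed
qed

lemma topk_char:
  fixes x :: "real^'n"
  assumes "k \<le> CARD('n)"
  shows "topk_sum k x \<le> r \<longleftrightarrow> (\<forall>S. card S = k \<longrightarrow> sum (($) x) S \<le> r)"
proof -
  obtain T where T: "card T = k" and dom: "\<forall>i\<in>T. \<forall>j. j \<notin> T \<longrightarrow> x $ j \<le> x $ i"
    using exists_dom[OF assms] by blast
  have eq: "topk_sum k x = sum (($) x) T" using topk_dom[OF T dom] .
  have le: "sum (($) x) S \<le> sum (($) x) T" if S: "card S = k" for S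
  proof (cases "T = {}")
    case True thus ?thesis using S T by simp
  next
    case False
    define c where "c = Min ((($) x) ` T)"
    have cin: "c \<le> x $ i" if "i \<in> T" for i unfolding c_def using that by simp
    have cout: "x $ j \<le> c" if "j \<notin> T" for j
      unfolding c_def using False dom that by (subst Min_ge_iff) auto
    have cd: "card (S - T) = card (T - S)"
      using card_Diff_subset_Int[of S T] card_Diff_subset_Int[of T S] S T by (simp add: Int_commute)
    have "sum (($) x) (S - T) \<le> of_nat (card (S - T)) * c"
      using sum_bounded_above[of "S - T" "($) x" c] cout by auto
    also have "\<dots> = of_nat (card (T - S)) * c" using cd by simp
    also have "\<dots> \<le> sum (($) x) (T - S)"
      using sum_bounded_below[of "T - S" c "($) x"] cin by auto
    finally have "sum (($) x) (S - T) \<le> sum (($) x) (T - S)" .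
    moreover have "sum (($) x) S = sum (($) x) (S - T) + sum (($) x) (S \<inter> T)"
      using sum.Int_Diff[of S "($) x" T] by simp
    moreover have "sum (($) x) T = sum (($) x) (T - S) + sum (($) x) (S \<inter> T)"
      using sum.Int_Diff[of T "($) x" S] by (simp add: Int_commute)
    ultimately show ?thesis by simp
  qed
  show ?thesis
  proof
    assume "topk_sum k x \<le> r" thus "\<forall>S. card S = k \<longrightarrow> sum (($) x) S \<le> r"
      using eq le by (auto intro: order_trans)
  next
    assume "\<forall>S. card S = k \<longrightarrow> sum (($) x) S \<le> r" thus "topk_sum k x \<le> r"
      using eq T by simp
  qed
qed


lemma proj_iff:
  fixes C :: "(real^'n) set"
  assumes "closed C" "convex C" "C \<noteq> {}"
  shows "is_proj_min C x0 x \<longleftrightarrow> x = closest_point C x0"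
proof -
  have "is_proj_min C x0 x \<longleftrightarrow> x \<in> C \<and> (\<forall>y\<in>C. dist x0 x \<le> dist x0 y)"
    unfolding is_proj_min_def dist_norm
    by (simp add: norm_minus_commute power_mono_iff)
  also have "\<dots> \<longleftrightarrow> x = closest_point C x0"
  proof
    assume "x \<in> C \<and> (\<forall>y\<in>C. dist x0 x \<le> dist x0 y)"
    thus "x = closest_point C x0" using closest_point_unique[OF assms(2,1)] by blast
  next
    assume "x = closest_point C x0"
    thus "x \<in> C \<and> (\<forall>y\<in>C. dist x0 x \<le> dist x0 y)" using closest_point_exists[OF assms(1,3)] by blast
  qed
  finally show ?thesis .
qed

lemma ball_eq:
  assumes "k \<le> CARD('n)"
  shows "topk_ball k r = {x::real^'n. \<forall>S. card S = k \<longrightarrow> sum (($) x) S \<le> r}"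
  unfolding topk_ball_def using topk_char[OF assms] by auto

lemma ball_closed: "closed {x::real^'n. \<forall>S. card S = k \<longrightarrow> sum (($) x) S \<le> r}"
  by (intro closed_Collect_all closed_Collect_imp closed_Collect_le open_Collect_const)
     (auto intro!: continuous_intros)

lemma ball_convex: "convex {x::real^'n. \<forall>S. card S = k \<longrightarrow> sum (($) x) S \<le> r}"
proof (rule convexI)
  fix x y :: "real^'n" and u v :: real
  assume x: "x \<in> {x::real^'n. \<forall>S. card S = k \<longrightarrow> sum (($) x) S \<le> r}"
    and y: "y \<in> {x::real^'n. \<forall>S. card S = k \<longrightarrow> sum (($) x) S \<le> r}"
    and u: "0 \<le> u" and v: "0 \<le> v" and uv: "u + v = 1"
  show "u *\<^sub>R x + v *\<^sub>R y \<in> {x::real^'n. \<forall>S. card S = k \<longrightarrow> sum (($) x) S \<le> r}"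
  proof (simp only: mem_Collect_eq, intro allI impI)
    fix S :: "'n set" assume S: "card S = k"
    have "sum (($) (u *\<^sub>R x + v *\<^sub>R y)) S = u * sum (($) x) S + v * sum (($) y) S"
      by (simp add: sum.distrib sum_distrib_left)
    also have "\<dots> \<le> u * r + v * r"
      using x y S u v by (intro add_mono mult_left_mono) auto
    also have "\<dots> = r" using uv by (metis distrib_right mult_1)
    finally show "sum (($) (u *\<^sub>R x + v *\<^sub>R y)) S \<le> r" .
  qed
qed

lemma poly_closed: "closed (topk_poly K p r :: (real^'n) set)"
  unfolding topk_poly_def Ball_def
  by (intro closed_Collect_all closed_Collect_imp closed_Collect_le closed_Collect_conj
      open_Collect_const closed_Collect_const ballI)
     (auto intro!: continuous_intros)

lemma poly_convex: "convex (topk_poly K p r :: (real^'n) set)"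
proof (rule convexI, unfold topk_poly_def, clarsimp)
  fix x y :: "real^'n" and u v :: real
  assume x1: "sum (($) x) K \<le> r" and x2: "\<forall>i\<in>K. x $ p \<le> x $ i" and x3: "\<forall>j. j \<notin> K \<longrightarrow> x $ j \<le> x $ p"
    and y1: "sum (($) y) K \<le> r" and y2: "\<forall>i\<in>K. y $ p \<le> y $ i" and y3: "\<forall>j. j \<notin> K \<longrightarrow> y $ j \<le> y $ p"
    and u: "0 \<le> u" and v: "0 \<le> v" and uv: "u + v = 1"
  have "(\<Sum>i\<in>K. u * x $ i + v * y $ i) = u * sum (($) x) K + v * sum (($) y) K"
    by (simp add: sum.distrib sum_distrib_left)
  also have "\<dots> \<le> u * r + v * r"
    using x1 y1 u v by (intro add_mono mult_left_mono) auto
  also have "\<dots> = r" using uv by (metis distrib_right mult_1)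
  finally have "(\<Sum>i\<in>K. u * x $ i + v * y $ i) \<le> r" .
  moreover have "\<forall>i\<in>K. u * x $ p + v * y $ p \<le> u * x $ i + v * y $ i"
    using x2 y2 u v by (auto intro!: add_mono mult_left_mono)
  moreover have "\<forall>j. j \<notin> K \<longrightarrow> u * x $ j + v * y $ j \<le> u * x $ p + v * y $ p"
    using x3 y3 u v by (auto intro!: add_mono mult_left_mono)
  ultimately show "(\<Sum>i\<in>K. u * x $ i + v * y $ i) \<le> r \<and>
       (\<forall>i\<in>K. u * x $ p + v * y $ p \<le> u * x $ i + v * y $ i) \<and>
       (\<forall>j. j \<notin> K \<longrightarrow> u * x $ j + v * y $ j \<le> u * x $ p + v * y $ p)" by blast
qed


definition sw :: "'n \<Rightarrow> 'n \<Rightarrow> 'n \<Rightarrow> 'n" where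
  "sw a b i = (if i = a then b else if i = b then a else i)"

lemma sw_inj: "inj (sw a b)"
  unfolding inj_def sw_def by auto

lemma swap_in:
  assumes "y \<in> {x::real^'n. \<forall>S. card S = k \<longrightarrow> sum (($) x) S \<le> r}"
  shows "(\<chi> l. y $ sw a b l) \<in> {x::real^'n. \<forall>S. card S = k \<longrightarrow> sum (($) x) S \<le> r}"
proof (simp only: mem_Collect_eq, intro allI impI)
  fix S :: "'n set" assume S: "card S = k"
  have "sum (($) (\<chi> l. y $ sw a b l)) S = sum (($) y) (sw a b ` S)"
    by (simp add: sum.reindex[OF inj_on_subset[OF sw_inj subset_UNIV]] comp_def)
  moreover have "card (sw a b ` S) = card S" by (rule card_image[OF inj_on_subset[OF sw_inj subset_UNIV]])
  ultimately show "sum (($) (\<chi> l. y $ sw a b l)) S \<le> r" using assms S by auto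
qed

lemma norm_sq_sum: "(norm (v::real^'n))^2 = (\<Sum>i\<in>UNIV. (v $ i)^2)"
  by (simp add: norm_vec_def L2_set_def sum_nonneg)

lemma swap_norm:
  fixes y x0 :: "real^'n"
  assumes "a \<noteq> b" "y $ a < y $ b" "x0 $ b \<le> x0 $ a"
  shows "(norm ((\<chi> l. y $ sw a b l) - x0))^2 \<le> (norm (y - x0))^2"
proof -
  let ?z = "(\<chi> l. y $ sw a b l)"
  define D where "D l = (y $ l - x0 $ l)^2 - (?z $ l - x0 $ l)^2" for l
  have "(norm (y - x0))^2 - (norm (?z - x0))^2 = sum D UNIV"
    unfolding norm_sq_sum D_def by (simp add: sum_subtractf)
  also have "\<dots> = sum D {a, b}"
    by (rule sum.mono_neutral_right) (auto simp: D_def sw_def)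
  also have "\<dots> = D a + D b" using assms(1) by simp
  also have "\<dots> = 2 * (y $ b - y $ a) * (x0 $ a - x0 $ b)"
    unfolding D_def sw_def using assms(1) by (simp add: power2_eq_square algebra_simps)
  also have "\<dots> \<ge> 0" using assms by simp
  finally show ?thesis by simp
qed

theorem lemma2p1:
  fixes x0 :: "real^'n" and k :: nat and r :: real and K :: "'n set" and p :: 'n
  assumes "1 \<le> k" and "k \<le> CARD('n)"
    and "card K = k"
    and "\<forall>i\<in>K. \<forall>j. j \<notin> K \<longrightarrow> x0 $ j \<le> x0 $ i"
    and "p \<in> K" and "\<forall>i\<in>K. x0 $ p \<le> x0 $ i"
  shows "(\<exists>!x. is_proj_min (topk_ball k r) x0 x)
       \<and> (\<exists>!x. is_proj_min (topk_poly K p r) x0 x)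
       \<and> (\<forall>x. is_proj_min (topk_ball k r) x0 x \<longleftrightarrow> is_proj_min (topk_poly K p r) x0 x)"
proof -
  define B where "B = {x::real^'n. \<forall>S. card S = k \<longrightarrow> sum (($) x) S \<le> r}"
  define P where "P = topk_poly K p r"
  have Beq: "topk_ball k r = B" unfolding B_def using ball_eq[OF assms(2)] .
  have Bc: "closed B" "convex B" unfolding B_def using ball_closed ball_convex by auto
  have Pc: "closed P" "convex P" unfolding P_def using poly_closed poly_convex by auto
  have PB: "P \<subseteq> B"
  proof
    fix x assume "x \<in> P"
    hence x: "sum (($) x) K \<le> r" "\<forall>i\<in>K. x $ p \<le> x $ i" "\<forall>j. j \<notin> K \<longrightarrow> x $ j \<le> x $ p"
      unfolding P_def topk_poly_def by auto
    have "\<forall>i\<in>K. \<forall>j. j \<notin> K \<longrightarrow> x $ j \<le> x $ i" using x(2,3) by (meson order_trans)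
    hence "topk_sum k x = sum (($) x) K" using topk_dom[OF assms(3)] by blast
    thus "x \<in> B" using x(1) Beq unfolding topk_ball_def by auto
  qed
  define c where "c = r / real k"
  have "(\<chi> i. c) \<in> P" unfolding P_def topk_poly_def c_def using assms(1,3) by simp
  hence Pne: "P \<noteq> {}" by auto
  hence Bne: "B \<noteq> {}" using PB by auto
  define y where "y = closest_point B x0"
  have yB: "y \<in> B" and ymin: "\<forall>z\<in>B. dist x0 y \<le> dist x0 z"
    unfolding y_def using closest_point_exists[OF Bc(1) Bne] by auto
  have mono: "y $ b \<le> y $ a" if "x0 $ b \<le> x0 $ a" for a b
  proof (rule ccontr)
    assume c: "\<not> y $ b \<le> y $ a"
    hence ab: "a \<noteq> b" by auto
    let ?z = "(\<chi> l. y $ sw a b l)"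
    have zB: "?z \<in> B" using swap_in yB unfolding B_def by blast
    have n2: "(norm (?z - x0))^2 \<le> (norm (y - x0))^2" using swap_norm[OF ab _ that] c by simp
    have "norm (?z - x0) \<le> norm (y - x0)" by (rule power2_le_imp_le[OF n2]) simp
    hence dz: "dist x0 ?z \<le> dist x0 y" unfolding dist_norm by (simp add: norm_minus_commute)
    have "\<forall>w\<in>B. dist x0 ?z \<le> dist x0 w"
    proof
      fix w assume "w \<in> B"
      hence "dist x0 y \<le> dist x0 w" using ymin by blast
      thus "dist x0 ?z \<le> dist x0 w" using dz by linarith
    qed
    hence "?z = closest_point B x0" by (rule closest_point_unique[OF Bc(2,1) zB])
    hence "?z = y" unfolding y_def .
    hence "?z $ a = y $ a" by simp
    thus False using c by (simp add: sw_def)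
  qed
  have yP: "y \<in> P"
  proof -
    have d1: "\<forall>i\<in>K. y $ p \<le> y $ i" using mono assms(6) by auto
    have d2: "\<forall>j. j \<notin> K \<longrightarrow> y $ j \<le> y $ p" using mono assms(4,5) by auto
    have "\<forall>i\<in>K. \<forall>j. j \<notin> K \<longrightarrow> y $ j \<le> y $ i" using mono assms(4) by auto
    hence "topk_sum k y = sum (($) y) K" using topk_dom[OF assms(3)] by blast
    hence "sum (($) y) K \<le> r" using yB Beq unfolding topk_ball_def by auto
    thus ?thesis unfolding P_def topk_poly_def using d1 d2 by auto
  qed
  have yP2: "y = closest_point P x0"
    using closest_point_unique[OF Pc(2,1) yP] ymin PB by auto
  have eB: "\<And>x. is_proj_min (topk_ball k r) x0 x \<longleftrightarrow> x = y"
    unfolding Beq y_def using proj_iff[OF Bc(1,2) Bne] .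
  have eP: "\<And>x. is_proj_min (topk_poly K p r) x0 x \<longleftrightarrow> x = y"
    unfolding yP2 P_def[symmetric] using proj_iff[OF Pc(1,2) Pne] .
  show ?thesis using eB eP by auto
qed

end
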